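(* Let $(\mathcal{Y},\eta)$ be an $(n,m)$-voltage operator with $\mathcal{Y}$ connected, let $y_0$ be a flag of $\mathcal{Y}$, $L=\operatorname{Stab}_{\mathcal{C}^m}(y_0)$, $\zeta:L\to\mathcal{C}^n$, $\zeta(\omega)=\eta(W_\omega(y_0))$, and for $\upsilon\in\mathcal{C}^m$ let $\mathcal{Z}_\upsilon=\mathcal{C}^n/\zeta(L\cap L^\upsilon)$. Then the number of distinct premaniplexes in $\{\mathcal{Z}_\upsilon:\upsilon\in\mathcal{C}^m\}$ is at most the number of orbits of $\operatorname{Aut}(\mathcal{Y})$ on the flags of $\mathcal{Y}$.
   Context: An $m$-premaniplex is an edge-coloured graph (semi-edges and parallel edges allowed) with colours $\{0,\dots,m-1\}$ such that every vertex (flag) is the start of exactly one dart of each colour, and for $|i-j|\ge2$ alternating $i,j$-paths of length 4 are closed; $y^i$ is the $i$-adjacent flag. $\mathcal{C}^m=\langle r_0,\dots,r_{m-1}\mid r_i^2,\ (r_ir_j)^2\ (|i-j|\ge2)\rangle$ acts on the left on flags by $r_iy=y^i$; automorphisms act on the right. $L^\upsilon=\upsilon^{-1}L\upsilon$. For a subgroup $K\le\mathcal{C}^n$, $\mathcal{C}^n/K$ is the $n$-premaniplex with flags the left cosets $\omega K$ and $(\omega K)^i=r_i\omega K$. For a flag $y$ and $\omega\in\mathcal{C}^m$, $W_\omega(y)$ is the homotopy class of paths from $y$ whose colour sequence $i_1,\dots,i_k$ satisfies $r_{i_k}\cdots r_{i_1}=\omega$; these form the fundamental groupoid $\Pi(\mathcal{Y})$.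 A voltage assignment $\eta:\Pi(\mathcal{Y})\to\mathcal{C}^n$ satisfies $\eta(W_1W_2)=\eta(W_2)\eta(W_1)$; $(\mathcal{Y},\eta)$ is then an $(n,m)$-voltage operator. *)

theory Defs
  imports Main
begin

text \<open>A word [a1,...,ak] over colours {..<m} represents r_a1 r_a2 ... r_ak.
  cxrel m is the congruence on words generated by r_i^2 = 1 and
  (r_i r_j)^2 = 1 for |i-j| >= 2.\<close>

inductive cxrel :: "nat \<Rightarrow> nat list \<Rightarrow> nat list \<Rightarrow> bool" for m :: nat where
  cx_refl: "set w \<subseteq> {..<m} \<Longrightarrow> cxrel m w w"
| cx_del: "set u \<subseteq> {..<m} \<Longrightarrow> set v \<subseteq> {..<m} \<Longrightarrow> i < m \<Longrightarrow>
            cxrel m (u @ [i, i] @ v) (u @ v)"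
| cx_comm: "set u \<subseteq> {..<m} \<Longrightarrow> set v \<subseteq> {..<m} \<Longrightarrow> i < m \<Longrightarrow> j < m \<Longrightarrow>
            i + 2 \<le> j \<or> j + 2 \<le> i \<Longrightarrow> cxrel m (u @ [i, j] @ v) (u @ [j, i] @ v)"
| cx_sym: "cxrel m u v \<Longrightarrow> cxrel m v u"
| cx_trans: "cxrel m u v \<Longrightarrow> cxrel m v w \<Longrightarrow> cxrel m u w"

definition cls :: "nat \<Rightarrow> nat list \<Rightarrow> nat list set" where
  "cls m w = {v. cxrel m w v}"

definition Cox :: "nat \<Rightarrow> nat list set set" where
  "Cox m = cls m ` {w. set w \<subseteq> {..<m}}"

definition cmul :: "nat \<Rightarrow> nat list set \<Rightarrow> nat list set \<Rightarrow> nat list set" where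
  "cmul m a b = {w. \<exists>u\<in>a. \<exists>v\<in>b. cxrel m (u @ v) w}"

definition cinv :: "nat \<Rightarrow> nat list set \<Rightarrow> nat list set" where
  "cinv m a = {w. \<exists>u\<in>a. cxrel m (rev u) w}"

definition gen :: "nat \<Rightarrow> nat \<Rightarrow> nat list set" where
  "gen m i = cls m [i]"

definition conjg :: "nat \<Rightarrow> nat list set set \<Rightarrow> nat list set \<Rightarrow> nat list set set" where
  "conjg m L v = (\<lambda>w. cmul m (cinv m v) (cmul m w v)) ` L"

text \<open>An m-premaniplex is given by a flag set F and the adjacency maps
  adj i y = y^i (i < m).\<close>
definition premaniplex :: "nat \<Rightarrow> 'a set \<Rightarrow> (nat \<Rightarrow> 'a \<Rightarrow> 'a) \<Rightarrow> bool" where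
  "premaniplex m F adj \<longleftrightarrow>
     (\<forall>i<m. \<forall>y\<in>F. adj i y \<in> F \<and> adj i (adj i y) = y) \<and>
     (\<forall>i<m. \<forall>j<m. i + 2 \<le> j \<or> j + 2 \<le> i \<longrightarrow>
        (\<forall>y\<in>F. adj i (adj j (adj i (adj j y))) = y))"

text \<open>Action of a word: r_a1 ... r_ak y (r_ak applied first).\<close>
definition wact :: "(nat \<Rightarrow> 'a \<Rightarrow> 'a) \<Rightarrow> nat list \<Rightarrow> 'a \<Rightarrow> 'a" where
  "wact adj w y = foldr adj w y"

text \<open>Left action of C^m on flags (well defined on premaniplexes).\<close>
definition cact :: "(nat \<Rightarrow> 'a \<Rightarrow> 'a) \<Rightarrow> nat list set \<Rightarrow> 'a \<Rightarrow> 'a" where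
  "cact adj \<omega> y = wact adj (SOME w. w \<in> \<omega>) y"

definition connected_pm :: "nat \<Rightarrow> 'a set \<Rightarrow> (nat \<Rightarrow> 'a \<Rightarrow> 'a) \<Rightarrow> bool" where
  "connected_pm m F adj \<longleftrightarrow>
     (\<forall>y\<in>F. \<forall>z\<in>F. \<exists>w. set w \<subseteq> {..<m} \<and> wact adj w y = z)"

definition pm_aut :: "nat \<Rightarrow> 'a set \<Rightarrow> (nat \<Rightarrow> 'a \<Rightarrow> 'a) \<Rightarrow> ('a \<Rightarrow> 'a) set" where
  "pm_aut m F adj = {\<phi>. bij_betw \<phi> F F \<and> (\<forall>i<m. \<forall>y\<in>F. \<phi> (adj i y) = adj i (\<phi> y))}"

definition aut_orbits :: "nat \<Rightarrow> 'a set \<Rightarrow> (nat \<Rightarrow> 'a \<Rightarrow> 'a) \<Rightarrow> 'a set set" where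
  "aut_orbits m F adj = (\<lambda>y. (\<lambda>\<phi>. \<phi> y) ` pm_aut m F adj) ` F"

definition stab :: "nat \<Rightarrow> (nat \<Rightarrow> 'a \<Rightarrow> 'a) \<Rightarrow> 'a \<Rightarrow> nat list set set" where
  "stab m adj y0 = {\<omega> \<in> Cox m. cact adj \<omega> y0 = y0}"

text \<open>Since in a premaniplex the homotopy classes of paths starting at y are
  exactly the W_\<omega>(y), \<omega> \<in> C^m, a voltage assignment on the fundamental
  groupoid is a map eta y \<omega> = eta(W_\<omega>(y)) in C^n with
  eta(W_\<omega>(y) W_\<tau>(\<omega> y)) = eta(W_\<tau>(\<omega> y)) eta(W_\<omega>(y)), where
  W_\<omega>(y) W_\<tau>(\<omega> y) = W_{\<tau>\<omega>}(y).\<close>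
definition voltage_operator ::
  "nat \<Rightarrow> nat \<Rightarrow> 'a set \<Rightarrow> (nat \<Rightarrow> 'a \<Rightarrow> 'a) \<Rightarrow> ('a \<Rightarrow> nat list set \<Rightarrow> nat list set) \<Rightarrow> bool" where
  "voltage_operator n m F adj \<eta> \<longleftrightarrow> premaniplex m F adj \<and>
     (\<forall>y\<in>F. \<forall>\<omega>\<in>Cox m. \<eta> y \<omega> \<in> Cox n) \<and>
     (\<forall>y\<in>F. \<forall>\<omega>\<in>Cox m. \<forall>\<tau>\<in>Cox m.
        \<eta> y (cmul m \<tau> \<omega>) = cmul n (\<eta> (cact adj \<omega> y) \<tau>) (\<eta> y \<omega>))"

definition lcoset :: "nat \<Rightarrow> nat list set \<Rightarrow> nat list set set \<Rightarrow> nat list set set" where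
  "lcoset n \<omega> K = (\<lambda>k. cmul n \<omega> k) ` K"

text \<open>C^n/K as (flag set, adjacency): flags are the cosets \<omega>K, and
  (\<omega>K)^i = r_i \<omega> K.\<close>
definition coset_pm :: "nat \<Rightarrow> nat list set set \<Rightarrow>
    nat list set set set \<times> (nat \<Rightarrow> nat list set set \<Rightarrow> nat list set set)" where
  "coset_pm n K = ((\<lambda>\<omega>. lcoset n \<omega> K) ` Cox n, (\<lambda>i C. cmul n (gen n i) ` C))"

end

theory Submission
  imports Defs
begin

abbreviation valid :: "nat \<Rightarrow> nat list \<Rightarrow> bool" where
  "valid m w \<equiv> set w \<subseteq> {..<m}"

lemma cxrel_valid: "cxrel m u v \<Longrightarrow> valid m u \<and> valid m v"
  by (induction rule: cxrel.induct) auto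

lemma cxrel_app_right: "cxrel m u v \<Longrightarrow> valid m w \<Longrightarrow> cxrel m (u@w) (v@w)"
proof (induction rule: cxrel.induct)
  case (cx_refl w') then show ?case by (intro cxrel.cx_refl) auto
next
  case (cx_del u v i) then show ?case using cxrel.cx_del[of u m "v@w" i] by auto
next
  case (cx_comm u v i j) then show ?case using cxrel.cx_comm[of u m "v@w" i j] by auto
next
  case (cx_sym u v) then show ?case by (auto intro: cxrel.cx_sym)
next
  case (cx_trans u v w') then show ?case by (auto intro: cxrel.cx_trans)
qed

lemma cxrel_app_left: "cxrel m u v \<Longrightarrow> valid m w \<Longrightarrow> cxrel m (w@u) (w@v)"
proof (induction rule: cxrel.induct)
  case (cx_refl w') then show ?case by (intro cxrel.cx_refl) auto
next
  case (cx_del u v i) then show ?case using cxrel.cx_del[of "w@u" m v i] by auto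
next
  case (cx_comm u v i j) then show ?case using cxrel.cx_comm[of "w@u" m v i j] by auto
next
  case (cx_sym u v) then show ?case by (auto intro: cxrel.cx_sym)
next
  case (cx_trans u v w') then show ?case by (auto intro: cxrel.cx_trans)
qed

lemma cxrel_rev: "cxrel m u v \<Longrightarrow> cxrel m (rev u) (rev v)"
proof (induction rule: cxrel.induct)
  case (cx_refl w') then show ?case by (intro cxrel.cx_refl) auto
next
  case (cx_del u v i) then show ?case using cxrel.cx_del[of "rev v" m "rev u" i] by auto
next
  case (cx_comm u v i j) then show ?case
    using cxrel.cx_sym[OF cxrel.cx_comm[of "rev v" m "rev u" i j]] by auto
next
  case (cx_sym u v) then show ?case by (auto intro: cxrel.cx_sym)
next
  case (cx_trans u v w') then show ?case by (auto intro: cxrel.cx_trans)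
qed

lemma cls_eq: "cxrel m a b \<Longrightarrow> cls m a = cls m b"
  unfolding cls_def by (auto intro: cxrel.cx_sym cxrel.cx_trans)

lemma cmul_cls: assumes "valid m a" "valid m b"
  shows "cmul m (cls m a) (cls m b) = cls m (a@b)"
proof
  show "cmul m (cls m a) (cls m b) \<subseteq> cls m (a@b)"
  proof
    fix w assume "w \<in> cmul m (cls m a) (cls m b)"
    then obtain u v where u: "cxrel m a u" and v: "cxrel m b v" and w: "cxrel m (u@v) w"
      unfolding cmul_def cls_def by auto
    have "cxrel m (a@b) (u@b)" using cxrel_app_right[OF u assms(2)] .
    moreover have "cxrel m (u@b) (u@v)" using cxrel_app_left[OF v] cxrel_valid[OF u] by auto
    ultimately show "w \<in> cls m (a@b)" using w unfolding cls_def by (auto intro: cxrel.cx_trans)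
  qed
next
  show "cls m (a@b) \<subseteq> cmul m (cls m a) (cls m b)"
    using assms unfolding cmul_def cls_def by (auto intro: cxrel.cx_refl)
qed

lemma cinv_cls: assumes "valid m a" shows "cinv m (cls m a) = cls m (rev a)"
proof
  show "cinv m (cls m a) \<subseteq> cls m (rev a)"
    unfolding cinv_def cls_def by (auto dest: cxrel_rev intro: cxrel.cx_trans)
next
  show "cls m (rev a) \<subseteq> cinv m (cls m a)"
    using assms unfolding cinv_def cls_def by (auto intro: cxrel.cx_refl)
qed

lemma cancel: "valid m u \<Longrightarrow> valid m p \<Longrightarrow> valid m v \<Longrightarrow> cxrel m (u @ rev p @ p @ v) (u @ v)"
proof (induction p arbitrary: v)
  case Nil then show ?case by simp (rule cxrel.cx_refl, auto)
next
  case (Cons a p)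
  have "cxrel m ((u @ rev p) @ [a,a] @ (p @ v)) ((u @ rev p) @ (p @ v))"
    using Cons.prems by (intro cxrel.cx_del) auto
  moreover have "cxrel m (u @ rev p @ p @ v) (u @ v)" using Cons by auto
  ultimately show ?case by (auto intro: cxrel.cx_trans)
qed

lemma wact_append: "wact adj (u@v) y = wact adj u (wact adj v y)"
  unfolding wact_def by simp

lemma wact_Cons: "wact adj (a#u) y = adj a (wact adj u y)"
  unfolding wact_def by simp

lemma wact_Nil: "wact adj [] y = y"
  unfolding wact_def by simp

lemma pm_adj: "premaniplex m F adj \<Longrightarrow> i < m \<Longrightarrow> y \<in> F \<Longrightarrow> adj i y \<in> F"
  unfolding premaniplex_def by blast

lemma pm_inv: "premaniplex m F adj \<Longrightarrow> i < m \<Longrightarrow> y \<in> F \<Longrightarrow> adj i (adj i y) = y"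
  unfolding premaniplex_def by blast

lemma pm_comm4: "premaniplex m F adj \<Longrightarrow> i < m \<Longrightarrow> j < m \<Longrightarrow> i + 2 \<le> j \<or> j + 2 \<le> i \<Longrightarrow> y \<in> F
   \<Longrightarrow> adj i (adj j (adj i (adj j y))) = y"
  unfolding premaniplex_def by blast

lemma wact_in: "premaniplex m F adj \<Longrightarrow> valid m w \<Longrightarrow> y \<in> F \<Longrightarrow> wact adj w y \<in> F"
proof (induction w)
  case Nil then show ?case by (simp add: wact_Nil)
next
  case (Cons a w)
  then have "wact adj w y \<in> F" by simp
  then show ?case using Cons.prems pm_adj[of m F adj a] by (simp add: wact_Cons)
qed

lemma wact_rev: "premaniplex m F adj \<Longrightarrow> valid m p \<Longrightarrow> y \<in> F \<Longrightarrow> wact adj p (wact adj (rev p) y) = y"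
proof (induction p arbitrary: y)
  case Nil then show ?case by (simp add: wact_Nil)
next
  case (Cons a p)
  have ay: "adj a y \<in> F" using Cons.prems pm_adj[of m F adj a] by simp
  have "wact adj (a#p) (wact adj (rev (a#p)) y) = adj a (wact adj p (wact adj (rev p) (adj a y)))"
    by (simp add: wact_append wact_Cons wact_Nil)
  also have "\<dots> = adj a (adj a y)" using Cons.IH[OF Cons.prems(1) _ ay] Cons.prems by simp
  also have "\<dots> = y" using Cons.prems pm_inv[of m F adj a] by simp
  finally show ?case .
qed

lemma adj_comm: assumes "premaniplex m F adj" "i < m" "j < m" "i + 2 \<le> j \<or> j + 2 \<le> i" "x \<in> F"
  shows "adj i (adj j x) = adj j (adj i x)"
proof -
  have x1: "adj i x \<in> F" using pm_adj[OF assms(1,2,5)] .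
  have x': "adj j (adj i x) \<in> F" using pm_adj[OF assms(1,3) x1] .
  have "adj i (adj j (adj i (adj j (adj j (adj i x))))) = adj j (adj i x)"
    using pm_comm4[OF assms(1-4) x'] .
  moreover have "adj j (adj j (adj i x)) = adj i x" using pm_inv[OF assms(1,3) x1] .
  moreover have "adj i (adj i x) = x" using pm_inv[OF assms(1,2,5)] .
  ultimately show ?thesis by simp
qed

lemma wact_cxrel: "cxrel m u v \<Longrightarrow> premaniplex m F adj \<Longrightarrow> y \<in> F \<Longrightarrow> wact adj u y = wact adj v y"
proof (induction rule: cxrel.induct)
  case (cx_refl w) then show ?case by simp
next
  case (cx_del u v i)
  have "wact adj v y \<in> F" using wact_in[of m F adj v y] cx_del by simp
  then have "adj i (adj i (wact adj v y)) = wact adj v y" using pm_inv[of m F adj i] cx_del by simp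
  then show ?case by (simp add: wact_append wact_Cons wact_Nil)
next
  case (cx_comm u v i j)
  have "wact adj v y \<in> F" using wact_in[of m F adj v y] cx_comm by simp
  then have "adj i (adj j (wact adj v y)) = adj j (adj i (wact adj v y))"
    using cx_comm adj_comm[of m F adj i j] by simp
  then show ?case by (simp add: wact_append wact_Cons wact_Nil)
next
  case (cx_sym u v) then show ?case by metis
next
  case (cx_trans u v w) then show ?case by metis
qed

lemma cact_cls: assumes "premaniplex m F adj" "valid m w" "y \<in> F"
  shows "cact adj (cls m w) y = wact adj w y"
proof -
  have "w \<in> cls m w" using assms unfolding cls_def by (auto intro: cxrel.cx_refl)
  then have "(SOME w'. w' \<in> cls m w) \<in> cls m w" by (rule someI)
  then have "cxrel m w (SOME w'. w' \<in> cls m w)" unfolding cls_def by auto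
  then show ?thesis unfolding cact_def using wact_cxrel assms by metis
qed

lemma aut_wact: assumes "\<phi> \<in> pm_aut m F adj" "premaniplex m F adj" "valid m x" "z \<in> F"
  shows "\<phi> (wact adj x z) = wact adj x (\<phi> z)"
  using assms(3)
proof (induction x)
  case Nil then show ?case by (simp add: wact_Nil)
next
  case (Cons a x)
  have "wact adj x z \<in> F" using wact_in assms Cons by auto
  then show ?case using Cons assms(1) unfolding pm_aut_def by (auto simp: wact_Cons)
qed

definition SS :: "nat \<Rightarrow> (nat \<Rightarrow> 'a \<Rightarrow> 'a) \<Rightarrow> 'a \<Rightarrow> nat list set set" where
  "SS m adj z = cls m ` {x. valid m x \<and> wact adj x z = z}"

lemma stab_SS: assumes "premaniplex m F adj" "y0 \<in> F"
  shows "stab m adj y0 = SS m adj y0"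
  using assms cact_cls[OF assms(1) _ assms(2)]
  unfolding stab_def SS_def Cox_def by auto

lemma SS_I: "valid m x \<Longrightarrow> wact adj x z = z \<Longrightarrow> cls m x \<in> SS m adj z"
  unfolding SS_def by blast

lemma conjg_SS: assumes "premaniplex m F adj" "y0 \<in> F" "valid m p"
  shows "conjg m (SS m adj y0) (cls m p) = SS m adj (wact adj (rev p) y0)"
proof -
  define z where "z = wact adj (rev p) y0"
  have vr: "valid m (rev p)" using assms by auto
  have wr: "wact adj p z = y0" unfolding z_def using wact_rev[OF assms(1) assms(3) assms(2)] .
  show ?thesis unfolding z_def[symmetric]
  proof
    show "conjg m (SS m adj y0) (cls m p) \<subseteq> SS m adj z"
    proof
      fix c assume "c \<in> conjg m (SS m adj y0) (cls m p)"
      then obtain w where w: "valid m w" "wact adj w y0 = y0"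
        and c: "c = cmul m (cinv m (cls m p)) (cmul m (cls m w) (cls m p))"
        unfolding conjg_def SS_def by blast
      have vwp: "valid m (w @ p)" using w(1) assms(3) by simp
      have c2: "c = cls m (rev p @ w @ p)" unfolding c cinv_cls[OF assms(3)] cmul_cls[OF w(1) assms(3)]
        cmul_cls[OF vr vwp] ..
      have "wact adj (rev p @ w @ p) z = wact adj (rev p) (wact adj w (wact adj p z))"
        by (simp only: wact_append)
      also have "\<dots> = wact adj (rev p) (wact adj w y0)" unfolding wr ..
      also have "\<dots> = z" unfolding w(2) z_def ..
      finally have "wact adj (rev p @ w @ p) z = z" .
      moreover have "valid m (rev p @ w @ p)" using vr vwp by simp
      ultimately show "c \<in> SS m adj z" unfolding c2 by (rule SS_I[rotated])
    qed
  next
    show "SS m adj z \<subseteq> conjg m (SS m adj y0) (cls m p)"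
    proof
      fix c assume "c \<in> SS m adj z"
      then obtain x where x: "valid m x" "wact adj x z = z" and c: "c = cls m x"
        unfolding SS_def by blast
      define w where "w = p @ x @ rev p"
      have vxr: "valid m (x @ rev p)" using x(1) vr by simp
      have vw: "valid m w" unfolding w_def using x(1) assms(3) by simp
      have "wact adj w y0 = wact adj p (wact adj x z)" unfolding w_def z_def by (simp only: wact_append)
      also have "\<dots> = y0" unfolding x(2) wr ..
      finally have ww: "wact adj w y0 = y0" .
      have "cmul m (cinv m (cls m p)) (cmul m (cls m w) (cls m p)) = cls m (rev p @ w @ p)"
        unfolding cinv_cls[OF assms(3)] cmul_cls[OF vw assms(3)] using vr vw assms(3) by (simp add: cmul_cls)
      also have "\<dots> = cls m ([] @ rev p @ p @ (x @ rev p @ p))" unfolding w_def by simp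
      also have "\<dots> = cls m ([] @ (x @ rev p @ p))"
        by (rule cls_eq, rule cancel) (use x assms in auto)
      also have "\<dots> = cls m (x @ rev p @ p @ [])" by simp
      also have "\<dots> = cls m (x @ [])"
        by (rule cls_eq, rule cancel) (use x assms in auto)
      finally have "c = cmul m (cinv m (cls m p)) (cmul m (cls m w) (cls m p))" using c by simp
      moreover have "cls m w \<in> SS m adj y0" using SS_I vw ww by metis
      ultimately show "c \<in> conjg m (SS m adj y0) (cls m p)" unfolding conjg_def by blast
    qed
  qed
qed

lemma SS_aut: assumes "\<phi> \<in> pm_aut m F adj" "premaniplex m F adj" "z \<in> F"
  shows "SS m adj (\<phi> z) = SS m adj z"
proof -
  have inj: "inj_on \<phi> F" using assms(1) unfolding pm_aut_def bij_betw_def by auto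
  have "\<And>x. valid m x \<Longrightarrow> wact adj x (\<phi> z) = \<phi> z \<longleftrightarrow> wact adj x z = z"
  proof -
    fix x assume vx: "valid m x"
    have "wact adj x (\<phi> z) = \<phi> (wact adj x z)" using aut_wact assms vx by metis
    moreover have "wact adj x z \<in> F" using wact_in assms vx by metis
    ultimately show "wact adj x (\<phi> z) = \<phi> z \<longleftrightarrow> wact adj x z = z"
      using inj assms(3) by (metis inj_on_eq_iff)
  qed
  then show ?thesis unfolding SS_def by auto
qed

lemma id_aut: "id \<in> pm_aut m F adj"
  unfolding pm_aut_def by auto

theorem lemma5p8:
  fixes n m :: nat and F :: "'a set" and adj :: "nat \<Rightarrow> 'a \<Rightarrow> 'a"
    and \<eta> :: "'a \<Rightarrow> nat list set \<Rightarrow> nat list set" and y0 :: 'a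
  assumes "voltage_operator n m F adj \<eta>"
    and "connected_pm m F adj"
    and "y0 \<in> F"
  defines "L \<equiv> stab m adj y0"
  defines "\<zeta> \<equiv> \<eta> y0"
  defines "Z \<equiv> (\<lambda>\<upsilon>. coset_pm n (\<zeta> ` (L \<inter> conjg m L \<upsilon>)))"
  shows "\<exists>f. inj_on f (Z ` Cox m) \<and> f ` (Z ` Cox m) \<subseteq> aut_orbits m F adj"
proof -
  have pm: "premaniplex m F adj" using assms(1) unfolding voltage_operator_def by auto
  define H where "H = (\<lambda>z. coset_pm n (\<zeta> ` (SS m adj y0 \<inter> SS m adj z)))"
  define g where "g = (\<lambda>\<upsilon>. wact adj (rev (SOME p. p \<in> \<upsilon>)) y0)"
  define Orb where "Orb = (\<lambda>z. (\<lambda>\<phi>. \<phi> z) ` pm_aut m F adj)"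
  have gZ: "g \<upsilon> \<in> F \<and> Z \<upsilon> = H (g \<upsilon>)" if vC: "\<upsilon> \<in> Cox m" for \<upsilon>
  proof -
    obtain p0 where p0: "valid m p0" "\<upsilon> = cls m p0" using vC unfolding Cox_def by blast
    have "p0 \<in> \<upsilon>" using p0 unfolding cls_def by (auto intro: cxrel.cx_refl)
    then have "(SOME p. p \<in> \<upsilon>) \<in> \<upsilon>" by (rule someI)
    then obtain p where p: "p = (SOME p. p \<in> \<upsilon>)" "cxrel m p0 p" using p0 unfolding cls_def by auto
    have vp: "valid m p" using cxrel_valid[OF p(2)] by auto
    have up: "\<upsilon> = cls m p" using p0 cls_eq[OF p(2)] by simp
    have "g \<upsilon> = wact adj (rev p) y0" unfolding g_def p(1) by simp
    moreover have "wact adj (rev p) y0 \<in> F" using wact_in[OF pm _ assms(3)] vp by auto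
    moreover have "Z \<upsilon> = H (wact adj (rev p) y0)"
      unfolding Z_def H_def L_def stab_SS[OF pm assms(3)] up conjg_SS[OF pm assms(3) vp] by simp
    ultimately show ?thesis by simp
  qed
  have HO: "H z1 = H z2" if hz: "z1 \<in> F" "z2 \<in> F" "Orb z1 = Orb z2" for z1 z2
  proof -
    have "z2 \<in> Orb z2" unfolding Orb_def using id_aut[of m F adj] by (metis id_apply image_eqI)
    then obtain \<phi> where "\<phi> \<in> pm_aut m F adj" "z2 = \<phi> z1" using hz unfolding Orb_def by auto
    then show ?thesis unfolding H_def using SS_aut pm hz by metis
  qed
  define ch where "ch = (\<lambda>X. SOME \<upsilon>. \<upsilon> \<in> Cox m \<and> Z \<upsilon> = X)"
  have ch: "ch X \<in> Cox m \<and> Z (ch X) = X" if "X \<in> Z ` Cox m" for X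
    unfolding ch_def using that by (rule imageE) (rule someI, auto)
  define f where "f = (\<lambda>X. Orb (g (ch X)))"
  have "inj_on f (Z ` Cox m)"
  proof (rule inj_onI)
    fix X1 X2 assume X: "X1 \<in> Z ` Cox m" "X2 \<in> Z ` Cox m" "f X1 = f X2"
    have "H (g (ch X1)) = H (g (ch X2))" using HO X ch gZ unfolding f_def by blast
    then show "X1 = X2" using X ch gZ by metis
  qed
  moreover have "f ` (Z ` Cox m) \<subseteq> aut_orbits m F adj"
    unfolding f_def Orb_def aut_orbits_def using ch gZ by blast
  ultimately show ?thesis by blast
qed

end
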